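(* The ladder chain $L(2,2,\sqrt2-1)$ is recurrent; that is, if $\mathbf{S}=(S_n:n\ge1)\sim L(2,2,\sqrt2-1)$ then $\mathbb{P}(S_n\neq 0\text{ for all }n\ge1)=0$.
   Context: Ladder chain: let $\xi_1,\xi_2,\dots$ be i.i.d. with values in $\{1,-1\}$, $\mathbb{P}(\xi_i=1)=p$, $\mathbb{P}(\xi_i=-1)=1-p$, and let $r,s$ be positive integers. Define $X_k=-1$ if $\xi_k=-1$; $X_k=s$ if $k\ge r$ and $\xi_k=\xi_{k-1}=\dots=\xi_{k-r+1}=1$; and $X_k=1$ otherwise. Let $S_n=X_1+\dots+X_n$. The process $\mathbf{S}=(S_n:n\ge1)$ is a ladder chain of order $r$, step $s$, probability $p$, written $\mathbf{S}\sim L(r,s,p)$. A ladder chain is transient if $\mathbb{P}(S_n\neq0\text{ for all }n\ge1)>0$, and recurrent otherwise. *)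

theory Defs
  imports "HOL-Probability.Probability"
begin

text \<open>The i.i.d. sequence xi_1, xi_2, ... is realised canonically on the space of
  boolean streams with the product of Bernoulli(p) measures: xi_k = 1 iff the
  (k-1)-th entry of the stream (0-based) is True, which has probability p.\<close>

definition ladder_space :: "real \<Rightarrow> bool stream measure" where
  "ladder_space p = stream_space (measure_pmf (bernoulli_pmf p))"

definition ladder_xi :: "bool stream \<Rightarrow> nat \<Rightarrow> int" where
  "ladder_xi \<omega> k = (if \<omega> !! (k - 1) then 1 else -1)"

definition ladder_X :: "nat \<Rightarrow> nat \<Rightarrow> bool stream \<Rightarrow> nat \<Rightarrow> int" where
  "ladder_X r s \<omega> k =
     (if ladder_xi \<omega> k = -1 then -1
      else if k \<ge> r \<and> (\<forall>j\<in>{k - r + 1..k}. ladder_xi \<omega> j = 1) then int s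
      else 1)"

definition ladder_S :: "nat \<Rightarrow> nat \<Rightarrow> bool stream \<Rightarrow> nat \<Rightarrow> int" where
  "ladder_S r s \<omega> n = (\<Sum>k = 1..n. ladder_X r s \<omega> k)"

definition ladder_escape :: "nat \<Rightarrow> nat \<Rightarrow> bool stream set" where
  "ladder_escape r s = {\<omega>. \<forall>n\<ge>1. ladder_S r s \<omega> n \<noteq> 0}"

definition ladder_transient :: "nat \<Rightarrow> nat \<Rightarrow> real \<Rightarrow> bool" where
  "ladder_transient r s p \<longleftrightarrow> measure (ladder_space p) (ladder_escape r s) > 0"

end

theory Submission imports Defs begin


definition pp :: real where "pp = sqrt 2 - 1"

lemma pp_pos: "0 < pp" and pp_lt1: "pp < 1" and pp_eq: "pp * pp + 2 * pp - 1 = 0"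
proof -
  have s: "sqrt 2 * sqrt 2 = (2::real)" by simp
  have "1 < sqrt (2::real)" by (simp add: real_less_rsqrt)
  moreover have "sqrt (2::real) < 2" by (simp add: real_sqrt_less_iff real_less_lsqrt)
  ultimately show "0 < pp" "pp < 1" unfolding pp_def by auto
  have "(sqrt 2 - 1) * (sqrt 2 - 1) + 2 * (sqrt 2 - 1) - 1 = sqrt 2 * sqrt 2 - (2::real)" by algebra
  then show "pp * pp + 2 * pp - 1 = 0" unfolding pp_def using s by simp
qed

definition stp :: "int \<times> bool \<Rightarrow> bool \<Rightarrow> int \<times> bool" where
  "stp x t = (if t then (fst x + (if snd x then 2 else 1), True) else (fst x - 1, False))"

definition dd :: "int \<times> bool \<Rightarrow> nat" where
  "dd x = (if fst x > 0 then nat (fst x) else if fst x = 0 then 0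
           else nat (4 * (- fst x)) + (if snd x then 2 else 3))"

definition nx :: "int \<times> bool \<Rightarrow> int \<times> bool" where
  "nx x = (if fst x > 0 then stp x False else stp x True)"

lemma dd_nx: "fst x \<noteq> 0 \<Longrightarrow> dd (nx x) < dd x"
  by (cases x) (auto simp: dd_def nx_def stp_def)

lemma MP:
  fixes g :: "int \<times> bool \<Rightarrow> real"
  assumes sub: "\<And>y. y \<notin> E \<Longrightarrow> g y \<le> pp * g (stp y True) + (1 - pp) * g (stp y False)"
    and Z: "\<And>y. y \<notin> E \<Longrightarrow> fst y \<noteq> 0"
    and le: "\<And>y. g y \<le> M" and y0: "g y0 = M"
  shows "\<exists>e\<in>E. g e = M"
proof (rule ccontr)
  assume H: "\<not> (\<exists>e\<in>E. g e = M)"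
  have "\<forall>y. dd y = n \<longrightarrow> g y \<noteq> M" for n
  proof (induction n rule: less_induct)
    case (less n)
    show ?case
    proof (intro allI impI notI)
      fix y assume dy: "dd y = n" and gy: "g y = M"
      then have yE: "y \<notin> E" using H by auto
      have a: "g (stp y True) \<le> M" "g (stp y False) \<le> M" using le by auto
      have b: "M \<le> pp * g (stp y True) + (1 - pp) * g (stp y False)" using sub[OF yE] gy by simp
      have "g (stp y True) = M"
      proof (rule ccontr)
        assume "g (stp y True) \<noteq> M"
        then have "g (stp y True) < M" using a by auto
        then have "pp * g (stp y True) < pp * M" using pp_pos by simp
        moreover have "(1 - pp) * g (stp y False) \<le> (1 - pp) * M" using a pp_lt1 by simp
        ultimately show False using b by (simp add: algebra_simps)
      qed
      moreover have "g (stp y False) = M"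
      proof (rule ccontr)
        assume "g (stp y False) \<noteq> M"
        then have "g (stp y False) < M" using a by auto
        then have "(1 - pp) * g (stp y False) < (1 - pp) * M" using pp_lt1 by simp
        moreover have "pp * g (stp y True) \<le> pp * M" using a pp_pos by simp
        ultimately show False using b by (simp add: algebra_simps)
      qed
      ultimately have "g (nx y) = M" by (simp add: nx_def)
      moreover have "dd (nx y) < n" using dd_nx[OF Z[OF yE]] dy by simp
      ultimately show False using less by auto
    qed
  qed
  then have "g y0 \<noteq> M" by blast
  then show False using y0 by simp
qed

lemma sqrt_concave:
  fixes a b q :: real
  assumes "0 \<le> a" "0 \<le> b" "0 \<le> q" "q \<le> 1"
  shows "q * sqrt a + (1 - q) * sqrt b \<le> sqrt (q * a + (1 - q) * b)"
proof -
  define s where "s = sqrt a"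
  define t where "t = sqrt b"
  have sa: "s * s = a" "t * t = b" "0 \<le> s" "0 \<le> t" using assms by (auto simp: s_def t_def)
  have "(q * s + (1 - q) * t)^2 \<le> q * a + (1 - q) * b"
  proof -
    have "q * a + (1 - q) * b - (q * s + (1 - q) * t)^2 = q * (1 - q) * (s - t)^2"
      by (simp add: sa(1,2)[symmetric] power2_eq_square algebra_simps)
    moreover have "0 \<le> q * (1 - q) * (s - t)^2" using assms by simp
    ultimately show ?thesis by linarith
  qed
  then have "sqrt ((q * s + (1 - q) * t)^2) \<le> sqrt (q * a + (1 - q) * b)"
    using real_sqrt_le_mono by blast
  moreover have "sqrt ((q * s + (1 - q) * t)^2) = q * s + (1 - q) * t"
    using sa assms by simp
  ultimately show ?thesis by (simp add: s_def t_def)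
qed

definition VV :: "int \<times> bool \<Rightarrow> real" where
  "VV x = sqrt \<bar>real_of_int (fst x) + (if snd x then pp else 0)\<bar>"

lemma VV_super:
  assumes "\<bar>fst x\<bar> \<ge> 3"
  shows "pp * VV (stp x True) + (1 - pp) * VV (stp x False) \<le> VV x"
proof -
  obtain h b where x: "x = (h, b)" by (cases x)
  define Y where "Y = real_of_int h + (if b then pp else 0)"
  define YT where "YT = real_of_int h + (if b then 2 else 1) + pp"
  define YF where "YF = real_of_int h - 1"
  have mart: "pp * YT + (1 - pp) * YF = Y"
    using pp_eq unfolding Y_def YT_def YF_def by (cases b) (auto simp: algebra_simps)
  have V: "VV x = sqrt \<bar>Y\<bar>" "VV (stp x True) = sqrt \<bar>YT\<bar>" "VV (stp x False) = sqrt \<bar>YF\<bar>"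
    by (auto simp: VV_def stp_def x Y_def YT_def YF_def)
  show ?thesis
  proof (cases "h \<ge> 3")
    case True
    then have "Y \<ge> 0" "YT \<ge> 0" "YF \<ge> 0" using pp_pos unfolding Y_def YT_def YF_def by auto
    then have ab: "\<bar>Y\<bar> = Y" "\<bar>YT\<bar> = YT" "\<bar>YF\<bar> = YF" by auto
    have "pp * sqrt YT + (1 - pp) * sqrt YF \<le> sqrt (pp * YT + (1 - pp) * YF)"
      by (rule sqrt_concave) (use \<open>YT \<ge> 0\<close> \<open>YF \<ge> 0\<close> pp_pos pp_lt1 in auto)
    then show ?thesis unfolding V ab mart .
  next
    case False
    then have "h \<le> -3" using assms x by auto
    then have "Y \<le> 0" "YT \<le> 0" "YF \<le> 0" using pp_lt1 unfolding Y_def YT_def YF_def by auto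
    moreover have "pp * (-YT) + (1 - pp) * (-YF) = -Y" using mart by (simp add: algebra_simps)
    ultimately have ab: "\<bar>Y\<bar> = -Y" "\<bar>YT\<bar> = -YT" "\<bar>YF\<bar> = -YF" and m2: "pp * (-YT) + (1 - pp) * (-YF) = -Y" by auto
    have "pp * sqrt (-YT) + (1 - pp) * sqrt (-YF) \<le> sqrt (pp * (-YT) + (1 - pp) * (-YF))"
      by (rule sqrt_concave) (use \<open>YT \<le> 0\<close> \<open>YF \<le> 0\<close> pp_pos pp_lt1 in auto)
    then show ?thesis unfolding V ab m2 .
  qed
qed

lemma VV_nonneg: "0 \<le> VV x" by (simp add: VV_def)

lemma VV_bound: "VV x \<le> R \<Longrightarrow> real_of_int \<bar>fst x\<bar> \<le> R * R + 1"
proof -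
  assume a: "VV x \<le> R"
  obtain h b where x: "x = (h, b)" by (cases x)
  have "\<bar>real_of_int h\<bar> - 1 \<le> \<bar>real_of_int h + (if b then pp else 0)\<bar>" by (cases b) (use pp_pos pp_lt1 in auto)
  moreover have "\<bar>real_of_int h + (if b then pp else 0)\<bar> \<le> R * R"
  proof -
    have "0 \<le> R" using a VV_nonneg order_trans by blast
    have "sqrt \<bar>real_of_int h + (if b then pp else 0)\<bar> \<le> R" using a by (simp add: VV_def x)
    moreover have "0 \<le> sqrt \<bar>real_of_int h + (if b then pp else 0)\<bar>" by simp
    ultimately have "sqrt \<bar>real_of_int h + (if b then pp else 0)\<bar> * sqrt \<bar>real_of_int h + (if b then pp else 0)\<bar> \<le> R * R"
      using \<open>0 \<le> R\<close> by (metis mult_mono)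
    then show ?thesis by simp
  qed
  ultimately show ?thesis by (simp add: x)
qed

theorem harmonic_zero:
  fixes v :: "int \<times> bool \<Rightarrow> real"
  assumes nn: "\<And>x. 0 \<le> v x" and le1: "\<And>x. v x \<le> 1"
    and z: "\<And>x. fst x = 0 \<Longrightarrow> v x = 0"
    and h: "\<And>x. fst x \<noteq> 0 \<Longrightarrow> v x = pp * v (stp x True) + (1 - pp) * v (stp x False)"
  shows "v x = 0"
proof -
  define F0 where "F0 = {x :: int \<times> bool. \<bar>fst x\<bar> < 3}"
  have finF0: "finite F0"
  proof -
    have "F0 \<subseteq> {-2..2} \<times> UNIV" by (auto simp: F0_def)
    then show ?thesis by (rule finite_subset) auto
  qed
  have ne: "(0, False) \<in> F0" by (simp add: F0_def)
  define m where "m = Max (v ` F0)"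
  have vm: "v e \<le> m" if "e \<in> F0" for e using finF0 that by (simp add: m_def)
  have step1: "v y \<le> m + \<epsilon> * VV y" if eps: "\<epsilon> > 0" for y \<epsilon>
  proof -
    define g where "g = (\<lambda>y. v y - \<epsilon> * VV y)"
    define Sx where "Sx = {z. g z \<ge> g y}"
    have finS: "finite Sx"
    proof -
      define R where "R = (1 - g y) / \<epsilon>"
      have "Sx \<subseteq> {z. real_of_int \<bar>fst z\<bar> \<le> R * R + 1}"
      proof
        fix z assume "z \<in> Sx"
        then have "v z - \<epsilon> * VV z \<ge> g y" by (simp add: Sx_def g_def)
        then have "\<epsilon> * VV z \<le> 1 - g y" using le1[of z] by linarith
        then have "VV z \<le> R" unfolding R_def using eps by (simp add: field_simps)
        then show "z \<in> {z. real_of_int \<bar>fst z\<bar> \<le> R * R + 1}" using VV_bound by auto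
      qed
      moreover have "finite {z :: int \<times> bool. real_of_int \<bar>fst z\<bar> \<le> R * R + 1}"
      proof -
        define N where "N = ceiling (R * R + 1)"
        have "{z :: int \<times> bool. real_of_int \<bar>fst z\<bar> \<le> R * R + 1} \<subseteq> {-N..N} \<times> UNIV"
        proof
          fix z :: "int \<times> bool" assume "z \<in> {z. real_of_int \<bar>fst z\<bar> \<le> R * R + 1}"
          then have "real_of_int \<bar>fst z\<bar> \<le> R * R + 1" by simp
          then have "\<bar>fst z\<bar> \<le> N" unfolding N_def by linarith
          then show "z \<in> {-N..N} \<times> (UNIV :: bool set)" by (cases z) auto
        qed
        then show ?thesis by (rule finite_subset) auto
      qed
      ultimately show ?thesis by (rule finite_subset)
    qed
    have yS: "y \<in> Sx" by (simp add: Sx_def)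
    define M where "M = Max (g ` Sx)"
    have leM: "g z \<le> M" for z
    proof (cases "z \<in> Sx")
      case True then show ?thesis using finS by (simp add: M_def)
    next
      case False
      then have "g z < g y" by (simp add: Sx_def)
      moreover have "g y \<le> M" using finS yS by (simp add: M_def)
      ultimately show ?thesis by simp
    qed
    obtain y0 where "y0 \<in> Sx" "g y0 = M"
      using finS yS unfolding M_def by (metis (mono_tags, lifting) Max_in empty_iff finite_imageI image_iff image_is_empty)
    have sub: "g z \<le> pp * g (stp z True) + (1 - pp) * g (stp z False)" if "z \<notin> F0" for z
    proof -
      have a: "\<bar>fst z\<bar> \<ge> 3" and fz: "fst z \<noteq> 0" using that by (auto simp: F0_def)
      have "\<epsilon> * (pp * VV (stp z True) + (1 - pp) * VV (stp z False)) \<le> \<epsilon> * VV z"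
        using VV_super[OF a] eps by simp
      then show ?thesis unfolding g_def using h[OF fz] by (simp add: algebra_simps)
    qed
    have Zf: "\<And>z. z \<notin> F0 \<Longrightarrow> fst z \<noteq> 0" by (auto simp: F0_def)
    obtain e where "e \<in> F0" "g e = M"
      using MP[OF sub Zf leM \<open>g y0 = M\<close>] by blast
    then have "g y \<le> g e" using leM by simp
    then have "v y - \<epsilon> * VV y \<le> v e" using VV_nonneg[of e] eps unfolding g_def
      by (smt (verit) mult_nonneg_nonneg)
    then show ?thesis using vm[OF \<open>e \<in> F0\<close>] by simp
  qed
  have vle: "v y \<le> m" for y
  proof (rule ccontr)
    assume "\<not> v y \<le> m"
    define \<epsilon> where "\<epsilon> = (v y - m) / (2 * (VV y + 1))"
    have pos: "VV y + 1 > 0" using VV_nonneg[of y] by simp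
    have "\<epsilon> > 0" using \<open>\<not> v y \<le> m\<close> pos by (simp add: \<epsilon>_def)
    have "\<epsilon> * VV y \<le> \<epsilon> * (VV y + 1)" using \<open>\<epsilon> > 0\<close> by simp
    also have "\<dots> = (v y - m) / 2" using pos unfolding \<epsilon>_def by (simp add: field_simps)
    finally show False using step1[OF \<open>\<epsilon> > 0\<close>, of y] \<open>\<not> v y \<le> m\<close> by simp
  qed
  obtain y0 where "y0 \<in> F0" "v y0 = m"
    using finF0 ne unfolding m_def by (metis (mono_tags, lifting) Max_in empty_iff finite_imageI image_iff image_is_empty)
  obtain e where "fst e = 0" "v e = m"
    using MP[of "{x. fst x = 0}" v m y0] h vle \<open>v y0 = m\<close> by force
  then have "m = 0" using z by simp
  then show ?thesis using vle[of x] nn[of x] by simp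
qed



primrec wk :: "int \<times> bool \<Rightarrow> bool stream \<Rightarrow> nat \<Rightarrow> int \<times> bool" where
  "wk x \<omega> 0 = x"
| "wk x \<omega> (Suc n) = wk (stp x (shd \<omega>)) (stl \<omega>) n"

definition AA :: "int \<times> bool \<Rightarrow> bool stream set" where
  "AA x = {\<omega>. \<forall>k. fst (wk x \<omega> k) \<noteq> 0}"

abbreviation "NN \<equiv> measure_pmf (bernoulli_pmf pp)"
abbreviation "SS \<equiv> stream_space NN"

lemma space_SS: "space SS = UNIV"
  by (simp add: space_stream_space)

lemma wk_sets: "{\<omega>. wk x \<omega> k = y} \<in> sets SS"
proof (induction k arbitrary: x)
  case 0
  show ?case by (cases "x = y") (auto simp: space_SS[symmetric])
next
  case (Suc k)
  have sh: "shd -` {b} \<in> sets SS" for b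
    using measurable_sets[OF measurable_shd[of NN], of "{b}"] by (simp add: space_SS)
  have st: "stl -` B \<in> sets SS" if "B \<in> sets SS" for B
    using measurable_sets[OF measurable_stl[of NN] that] by (simp add: space_SS)
  have eq: "{\<omega>. wk x \<omega> (Suc k) = y} =
     (shd -` {True} \<inter> stl -` {\<omega>. wk (stp x True) \<omega> k = y}) \<union>
     (shd -` {False} \<inter> stl -` {\<omega>. wk (stp x False) \<omega> k = y})"
    apply (rule set_eqI)
    subgoal for \<omega> by (cases "shd \<omega>") auto
    done
  have st2: "stl -` {\<omega>. wk z \<omega> k = y} \<in> sets SS" for z by (rule st[OF Suc.IH])
  show ?case unfolding eq by (intro sets.Un sets.Int sh st2)
qed

lemma wk_fst_sets: "{\<omega>. fst (wk x \<omega> k) \<noteq> 0} \<in> sets SS"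
proof -
  have "{\<omega>. fst (wk x \<omega> k) \<noteq> 0} = space SS - ({\<omega>. wk x \<omega> k = (0, True)} \<union> {\<omega>. wk x \<omega> k = (0, False)})"
    apply (rule set_eqI)
    subgoal for \<omega> by (cases "wk x \<omega> k") (auto simp: space_SS)
    done
  then show ?thesis using wk_sets by auto
qed

lemma AA_sets: "AA x \<in> sets SS"
proof -
  have "AA x = (\<Inter>k. {\<omega>. fst (wk x \<omega> k) \<noteq> 0})" by (auto simp: AA_def)
  then show ?thesis using wk_fst_sets by (auto intro!: sets.countable_INT)
qed

lemma ps_NN: "prob_space NN" by (rule prob_space_measure_pmf)

lemma ps_SS: "prob_space SS"
  by (rule prob_space.prob_space_stream_space[OF ps_NN])

lemma AA_Stream: "fst x \<noteq> 0 \<Longrightarrow> (t ## \<omega> \<in> AA x) \<longleftrightarrow> \<omega> \<in> AA (stp x t)"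
  unfolding AA_def
  apply auto
  subgoal for k by (drule spec[of _ "Suc k"]) simp
  subgoal for k by (cases k) auto
  done

lemma emeasure_shift:
  assumes "\<And>t \<omega>. (t ## \<omega> \<in> X) \<longleftrightarrow> \<omega> \<in> B t" "X \<in> sets SS"
  shows "emeasure SS X = emeasure SS (B True) * pp + emeasure SS (B False) * (1 - pp)"
proof -
  have "emeasure SS X = (\<integral>\<^sup>+t. emeasure SS {x\<in>space SS. t ## x \<in> X } \<partial>NN)"
    by (rule prob_space.emeasure_stream_space[OF ps_NN assms(2)])
  also have "\<dots> = (\<integral>\<^sup>+t. emeasure SS (B t) \<partial>NN)"
    using assms(1) by (simp add: space_SS)
  also have "\<dots> = emeasure SS (B True) * pp + emeasure SS (B False) * (1 - pp)"
    using pp_pos pp_lt1 by simp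
  finally show ?thesis .
qed

definition vv :: "int \<times> bool \<Rightarrow> real" where "vv x = measure SS (AA x)"

lemma vv_harm:
  assumes "fst x \<noteq> 0"
  shows "vv x = pp * vv (stp x True) + (1 - pp) * vv (stp x False)"
proof -
  have "emeasure SS (AA x) = emeasure SS (AA (stp x True)) * pp + emeasure SS (AA (stp x False)) * (1 - pp)"
    by (rule emeasure_shift) (use AA_Stream[OF assms] AA_sets in auto)
  then have "ennreal (vv x) = ennreal (vv (stp x True)) * ennreal pp + ennreal (vv (stp x False)) * ennreal (1 - pp)"
    unfolding vv_def using finite_measure.emeasure_eq_measure[OF prob_space.finite_measure[OF ps_SS]] by simp
  also have "\<dots> = ennreal (vv (stp x True) * pp + vv (stp x False) * (1 - pp))"
  proof -
    have n: "0 \<le> vv z" for z by (simp add: vv_def)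
    show ?thesis using pp_pos pp_lt1 n[of "stp x True"] n[of "stp x False"]
      by (subst ennreal_plus) (auto simp: ennreal_mult)
  qed
  finally have "vv x = vv (stp x True) * pp + vv (stp x False) * (1 - pp)"
    using pp_pos pp_lt1 by (subst (asm) ennreal_inj) (auto simp: vv_def)
  then show ?thesis by (simp add: algebra_simps)
qed

lemma vv_zero: "vv x = 0"
proof (rule harmonic_zero)
  show "0 \<le> vv x" for x by (simp add: vv_def)
  show "vv x \<le> 1" for x using prob_space.prob_le_1[OF ps_SS] by (simp add: vv_def)
  show "fst x = 0 \<Longrightarrow> vv x = 0" for x
  proof -
    assume "fst x = 0"
    then have "AA x = {}" unfolding AA_def by (auto intro: exI[of _ 0])
    then show ?thesis by (simp add: vv_def)
  qed
  show "fst x \<noteq> 0 \<Longrightarrow> vv x = pp * vv (stp x True) + (1 - pp) * vv (stp x False)" for x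
    by (rule vv_harm)
qed



lemma wk_Suc': "wk x \<omega> (Suc n) = stp (wk x \<omega> n) (\<omega> !! n)"
  by (induction n arbitrary: x \<omega>) auto

lemma X_Suc: "ladder_X 2 2 \<omega> (Suc n) = (if \<omega> !! n then (if 1 \<le> n \<and> \<omega> !! (n - 1) then 2 else 1) else -1)"
proof (cases n)
  case 0 then show ?thesis by (simp add: ladder_X_def ladder_xi_def)
next
  case (Suc m)
  have "{Suc n - 2 + 1..Suc n} = {n, Suc n}" using Suc by auto
  then show ?thesis using Suc by (auto simp: ladder_X_def ladder_xi_def)
qed

lemma wk_S: "wk (0, False) \<omega> n = (ladder_S 2 2 \<omega> n, 1 \<le> n \<and> \<omega> !! (n - 1))"
proof (induction n)
  case 0 then show ?case by (simp add: ladder_S_def)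
next
  case (Suc n)
  have "ladder_S 2 2 \<omega> (Suc n) = ladder_S 2 2 \<omega> n + ladder_X 2 2 \<omega> (Suc n)"
    by (simp add: ladder_S_def)
  then show ?case using Suc by (simp add: wk_Suc' X_Suc stp_def del: wk.simps)
qed

lemma all_ge1: "(\<forall>n\<ge>1. P n) \<longleftrightarrow> (\<forall>k. P (Suc k))"
  apply auto
  subgoal for n by (cases n) auto
  done

theorem theorem4p4:
  shows "ladder_escape 2 2 \<in> sets (ladder_space (sqrt 2 - 1))
         \<and> measure (ladder_space (sqrt 2 - 1)) (ladder_escape 2 2) = 0"
proof -
  have E: "ladder_escape 2 2 = (\<Inter>k. {\<omega>. fst (wk (0, False) \<omega> (Suc k)) \<noteq> 0})"
  proof -
    have "ladder_escape 2 2 = {\<omega>. \<forall>k. ladder_S 2 2 \<omega> (Suc k) \<noteq> 0}"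
      unfolding ladder_escape_def
      using all_ge1 by simp
    then show ?thesis by (simp add: wk_S del: wk.simps) blast
  qed
  have sets: "ladder_escape 2 2 \<in> sets SS"
  proof -
    have "\<And>k. {\<omega>. fst (wk (0, False) \<omega> (Suc k)) \<noteq> 0} \<in> sets SS" by (rule wk_fst_sets)
    then show ?thesis unfolding E by (intro sets.countable_INT) (auto simp del: wk.simps)
  qed
  have sh: "(t ## \<omega> \<in> ladder_escape 2 2) \<longleftrightarrow> \<omega> \<in> AA (stp (0, False) t)" for t \<omega>
    unfolding E AA_def by simp
  have "emeasure SS (ladder_escape 2 2) = emeasure SS (AA (stp (0, False) True)) * pp
       + emeasure SS (AA (stp (0, False) False)) * (1 - pp)"
    by (rule emeasure_shift[OF sh sets])
  also have "\<dots> = 0"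
    using finite_measure.emeasure_eq_measure[OF prob_space.finite_measure[OF ps_SS]] vv_zero
    by (simp add: vv_def)
  finally have "measure SS (ladder_escape 2 2) = 0" by (simp add: measure_def)
  then show ?thesis using sets unfolding ladder_space_def pp_def by simp
qed

end
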